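(* Let $m,n\ge1$ and $k$ be integers with $k^n\equiv1\pmod m$, let $G=\langle a,b\mid a^m=b^n=1,\ b^{-1}ab=a^k\rangle$, let $t=|k|_m$ and $n=rt$. Let $s$ be a prime with $\gcd(s,m)=1$, $\zeta$ a primitive $m$-th root of unity in $\overline{\mathbb{F}}_s$, and $q$ a power of $s$ with $q\equiv k^j\pmod m$ for some $j$. Assume $F=\mathbb{F}_q$ contains a primitive $r$-th root of unity $\eta$. Then for every integer $c$, the $t$-dimensional representation of $G$ over $\overline{\mathbb{F}}_s$ given by $$a\mapsto\mathrm{diag}(\zeta,\zeta^k,\dots,\zeta^{k^{t-1}}),$$ $$b\mapsto\text{the } t\times t \text{ matrix with entries } 1 \text{ in positions } (i+1,i) \ (1\le i\le t-1),\ \eta^c \text{ in position } (1,t),\ 0 \text{ elsewhere},$$ is realizable over $F$.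
   Context: $|k|_m$ denotes the multiplicative order of $k$ modulo $m$. A representation over $\overline{\mathbb{F}}_s$ is realizable over $\mathbb{F}_q$ if it is equivalent (over $\overline{\mathbb{F}}_s$) to a matrix representation with all matrix entries in $\mathbb{F}_q$. *)

theory Defs
  imports "Berlekamp_Zassenhaus.Finite_Field" "HOL-Algebra.Algebraic_Closure_Type"
    "Jordan_Normal_Form.Matrix" "HOL-Number_Theory.Number_Theory"
begin

text \<open>The algebraic closure of F_s is the type ('s mod_ring) alg_closure, where
  's is a type of prime cardinality s.  Matrices are Jordan_Normal_Form matrices,
  indexed from 0.\<close>

text \<open>The subfield F_q of an algebraically closed field of characteristic s:
  the roots of x^q - x.\<close>
definition finite_subfield :: "nat \<Rightarrow> 'a::field set" where
  "finite_subfield q = {x. x ^ q = x}"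

definition primitive_root_of_unity :: "nat \<Rightarrow> 'a::field \<Rightarrow> bool" where
  "primitive_root_of_unity n z \<longleftrightarrow> z ^ n = 1 \<and> (\<forall>i. 0 < i \<and> i < n \<longrightarrow> z ^ i \<noteq> 1)"

text \<open>Image of a representation: the matrix monoid generated by the images of the
  generators (for a finite group this equals the group generated by them).\<close>
inductive_set mat_gen :: "nat \<Rightarrow> 'a::semiring_1 mat set \<Rightarrow> 'a mat set"
  for d :: nat and gens :: "'a mat set" where
  one: "1\<^sub>m d \<in> mat_gen d gens"
| gen: "g \<in> gens \<Longrightarrow> g \<in> mat_gen d gens"
| mult: "g \<in> mat_gen d gens \<Longrightarrow> h \<in> mat_gen d gens \<Longrightarrow> g * h \<in> mat_gen d gens"

definition realizable_over :: "'a::field set \<Rightarrow> nat \<Rightarrow> 'a mat set \<Rightarrow> bool" where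
  "realizable_over F d S \<longleftrightarrow>
     (\<exists>P Q. P \<in> carrier_mat d d \<and> Q \<in> carrier_mat d d \<and> P * Q = 1\<^sub>m d \<and> Q * P = 1\<^sub>m d \<and>
        (\<forall>M\<in>S. \<forall>i<d. \<forall>j<d. (Q * M * P) $$ (i, j) \<in> F))"

definition rep_a :: "nat \<Rightarrow> int \<Rightarrow> 'a::field \<Rightarrow> 'a mat" where
  "rep_a t k z = mat t t (\<lambda>(i, j). if i = j then z powi (k ^ i) else 0)"

definition rep_b :: "nat \<Rightarrow> 'a::field \<Rightarrow> 'a mat" where
  "rep_b t e = mat t t (\<lambda>(i, j). if i = j + 1 then 1 else if i = 0 \<and> j = t - 1 then e else 0)"

end

theory Submission
  imports Defs "Jordan_Normal_Form.Determinant"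
begin


definition frob :: "nat \<Rightarrow> 'a::field mat \<Rightarrow> 'a mat" where
  "frob q M = map_mat (\<lambda>x. x ^ q) M"

lemma frob_sum:
  fixes f :: "'b \<Rightarrow> 'a::field"
  assumes hq: "\<And>x y::'a. (x + y) ^ q = x ^ q + y ^ q" and q: "q > 0"
  shows "(sum f S) ^ q = sum (\<lambda>i. f i ^ q) S"
  by (induction S rule: infinite_finite_induct) (auto simp: hq q)

lemma frob_mult:
  fixes A B :: "'a::field mat"
  assumes hq: "\<And>x y::'a. (x + y) ^ q = x ^ q + y ^ q" and q: "q > 0"
    and A: "A \<in> carrier_mat n n" and B: "B \<in> carrier_mat n n"
  shows "frob q (A * B) = frob q A * frob q B"
proof (rule eq_matI)
  fix i j assume i: "i < dim_row (frob q A * frob q B)" and j: "j < dim_col (frob q A * frob q B)"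
  then have i': "i < n" and j': "j < n" using A B by (auto simp: frob_def)
  have "frob q (A * B) $$ (i,j) = (\<Sum>k<n. A $$ (i,k) * B $$ (k,j)) ^ q"
    using A B i' j' by (auto simp: frob_def scalar_prod_def lessThan_atLeast0)
  also have "\<dots> = (\<Sum>k<n. A $$ (i,k) ^ q * B $$ (k,j) ^ q)"
    by (simp add: frob_sum[OF hq q] power_mult_distrib)
  also have "\<dots> = (frob q A * frob q B) $$ (i,j)"
    using A B i' j' by (auto simp: frob_def scalar_prod_def lessThan_atLeast0)
  finally show "frob q (A * B) $$ (i,j) = (frob q A * frob q B) $$ (i,j)" .
qed (use A B in \<open>auto simp: frob_def\<close>)

lemma frob_one: "q > 0 \<Longrightarrow> frob q (1\<^sub>m n :: 'a::field mat) = 1\<^sub>m n"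
  by (rule eq_matI) (auto simp: frob_def)

lemma rep_b_carrier: "rep_b t e \<in> carrier_mat t t" by (simp add: rep_b_def)
lemma rep_a_carrier: "rep_a t k z \<in> carrier_mat t t" by (simp add: rep_a_def)

lemma RB:
  fixes Y :: "'a::field mat"
  assumes Y: "Y \<in> carrier_mat t t" and YG: "\<And>p i. p < t \<Longrightarrow> i < t \<Longrightarrow> Y $$ (p,i) = G p i"
    and per: "\<And>p x. G p (x + t) = e * G p x" and p: "p < t" and i: "i < t"
  shows "(Y * rep_b t e) $$ (p,i) = G p (i+1)"
proof -
  have "(Y * rep_b t e) $$ (p,i) = (\<Sum>l\<in>{0..<t}. Y $$ (p,l) * rep_b t e $$ (l,i))"
    using Y p i by (auto simp: scalar_prod_def rep_b_def)
  also have "\<dots> = (\<Sum>l\<in>{0..<t}. if l = (if i + 1 < t then i + 1 else 0) then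
       (if i + 1 < t then G p (i+1) else e * G p 0) else 0)"
    using i p by (intro sum.cong refl) (auto simp: rep_b_def YG)
  also have "\<dots> = G p (i+1)"
  proof (cases "i + 1 < t")
    case False
    then have "i + 1 = t" using i by simp
    then show ?thesis using per[of p 0] by auto
  qed auto
  finally show ?thesis .
qed

lemma RBpow:
  fixes Y :: "'a::field mat"
  assumes Y: "Y \<in> carrier_mat t t" and YG: "\<And>p i. p < t \<Longrightarrow> i < t \<Longrightarrow> Y $$ (p,i) = G p i"
    and per: "\<And>p x. G p (x + t) = e * G p x"
  shows "p < t \<Longrightarrow> i < t \<Longrightarrow> (Y * (rep_b t e ^\<^sub>m j)) $$ (p,i) = G p (i+j)"
proof (induction j arbitrary: p i)
  case 0
  then show ?case using Y YG by (simp add: rep_b_def)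
next
  case (Suc j)
  have Bc: "rep_b t e \<in> carrier_mat t t" by (rule rep_b_carrier)
  have Bj: "rep_b t e ^\<^sub>m j \<in> carrier_mat t t" using Bc by (simp add: pow_carrier_mat)
  have "Y * (rep_b t e ^\<^sub>m Suc j) = (Y * (rep_b t e ^\<^sub>m j)) * rep_b t e"
    using Y Bc Bj by (simp add: assoc_mult_mat[symmetric, of Y t t _ t _ t])
  also have "\<dots> $$ (p,i) = G p (i + 1 + j)"
  proof (rule RB[where G="\<lambda>p x. G p (x + j)"])
    show "G p (x + t + j) = e * G p (x + j)" for p x
      using per[of p "x + j"] by (simp add: add.commute add.left_commute)
  qed (use Y Bj Suc in \<open>auto simp: add.commute add.left_commute\<close>)
  finally show ?case by simp
qed


lemma poly_sum_lt:
  fixes f :: "'a::field poly"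
  assumes "Polynomial.degree f < t"
  shows "poly f y = (\<Sum>p<t. Polynomial.coeff f p * y ^ p)"
proof -
  have "poly f y = (\<Sum>p\<le>Polynomial.degree f. Polynomial.coeff f p * y ^ p)" by (rule poly_altdef)
  also have "\<dots> = (\<Sum>p<t. Polynomial.coeff f p * y ^ p)"
    using assms by (intro sum.mono_neutral_left) (auto simp: coeff_eq_0)
  finally show ?thesis .
qed

lemma vandermonde_det:
  fixes xs A :: "nat \<Rightarrow> 'a::field"
  assumes inj: "inj_on xs {..<t}" and A: "\<And>i. i < t \<Longrightarrow> A i \<noteq> 0"
  shows "det (mat t t (\<lambda>(p,i). A i * xs i ^ p)) \<noteq> 0"
proof
  let ?Q = "mat t t (\<lambda>(p,i). A i * xs i ^ p)"
  have Qc: "?Q \<in> carrier_mat t t" by simp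
  assume "det ?Q = 0"
  then obtain v where v: "v \<in> carrier_vec t" "v \<noteq> 0\<^sub>v t" "?Q *\<^sub>v v = 0\<^sub>v t"
    using det_0_iff_vec_prod_zero_field[OF Qc] by blast
  have row: "(\<Sum>i<t. A i * xs i ^ p * v $ i) = 0" if p: "p < t" for p
  proof -
    have "(?Q *\<^sub>v v) $ p = 0" using v(3) p by simp
    then show ?thesis using p v(1) by (simp add: scalar_prod_def lessThan_atLeast0 row_def)
  qed
  have vz: "v $ i0 = 0" if i0: "i0 < t" for i0
  proof -
    define f where "f = (\<Prod>i\<in>{..<t} - {i0}. [:- xs i, 1:])"
    have "Polynomial.degree f \<le> sum (Polynomial.degree \<circ> (\<lambda>i. [:- xs i, 1:])) ({..<t} - {i0})"
      unfolding f_def by (rule Polynomial.degree_prod_sum_le) simp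
    also have "\<dots> = card ({..<t} - {i0})" by simp
    also have "\<dots> < t" using i0 by simp
    finally have df: "Polynomial.degree f < t" .
    have pf: "poly f (xs i) = 0" if it: "i < t" and False: "i \<noteq> i0" for i
    proof -
      have "poly f (xs i) = (\<Prod>l\<in>{..<t} - {i0}. poly [:- xs l, 1:] (xs i))"
        unfolding f_def by (rule poly_prod)
      also have "\<dots> = 0"
        by (rule prod_zero) (use False it in auto)
      finally show ?thesis .
    qed
    have nz: "poly f (xs i0) \<noteq> 0"
    proof -
      have "poly f (xs i0) = (\<Prod>l\<in>{..<t} - {i0}. poly [:- xs l, 1:] (xs i0))"
        unfolding f_def by (rule poly_prod)
      also have "\<dots> \<noteq> 0"
      proof (subst prod_zero_iff)
        show "\<not> (\<exists>a\<in>{..<t} - {i0}. poly [:- xs a, 1:] (xs i0) = 0)"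
        proof
          assume "\<exists>a\<in>{..<t} - {i0}. poly [:- xs a, 1:] (xs i0) = 0"
          then obtain a where a: "a < t" "a \<noteq> i0" "xs i0 = xs a" by auto
          then show False using inj i0 unfolding inj_on_def by blast
        qed
      qed simp
      finally show ?thesis .
    qed
    let ?c = "\<lambda>p. Polynomial.coeff f p"
    have "0 = (\<Sum>p<t. ?c p * (\<Sum>i<t. A i * xs i ^ p * v $ i))"
      by (rule sym, rule sum.neutral) (simp add: row)
    also have "\<dots> = (\<Sum>p<t. \<Sum>i<t. ?c p * (A i * xs i ^ p * v $ i))"
      by (simp only: sum_distrib_left)
    also have "\<dots> = (\<Sum>i<t. \<Sum>p<t. ?c p * (A i * xs i ^ p * v $ i))"
      by (rule sum.swap)
    also have "\<dots> = (\<Sum>i<t. (A i * v $ i) * (\<Sum>p<t. ?c p * xs i ^ p))"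
      unfolding sum_distrib_left by (intro sum.cong refl) (simp only: mult_ac)
    also have "\<dots> = (\<Sum>i<t. (A i * v $ i) * poly f (xs i))"
      by (simp only: poly_sum_lt[OF df])
    also have "\<dots> = (\<Sum>i\<in>{i0}. (A i * v $ i) * poly f (xs i))"
      by (rule sum.mono_neutral_right) (use i0 pf in auto)
    also have "\<dots> = A i0 * v $ i0 * poly f (xs i0)" by simp
    finally show ?thesis using nz A[OF i0] by simp
  qed
  have "v = 0\<^sub>v t" using v(1) vz by (intro eq_vecI) auto
  with v(2) show False by simp
qed



lemma powi_frob:
  fixes e :: "'a::field"
  assumes "e ^ q = e"
  shows "(e powi b) ^ q = e powi b"
proof -
  have "(e powi b) ^ q = (e ^ q) powi b" by (simp only: power_int_power power_int_power' mult.commute)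
  then show ?thesis using assms by simp
qed

lemma exA:
  fixes e :: "'a::alg_closed_field" and t j q :: nat
  assumes t: "t > 0" and e0: "e \<noteq> 0" and eq: "e ^ q = e" and q: "q \<ge> 2"
  shows "\<exists>A::nat \<Rightarrow> 'a. (\<forall>x. A x \<noteq> 0) \<and> (\<forall>x. A (x + t) = e * A x) \<and> (\<forall>x. A (x + j) = A x ^ q)"
proof -
  define g where "g = gcd j t"
  have g0: "g > 0" using t by (simp add: g_def)
  define J where "J = j div g"
  define L where "L = t div g"
  have jJ: "j = g * J" unfolding J_def g_def by simp
  have tL: "t = g * L" unfolding L_def g_def by simp
  have L0: "L > 0" using t tL by (cases L) auto
  have cop: "coprime J L" unfolding J_def L_def g_def using t by (intro div_gcd_coprime) auto
  obtain u where u: "[J * u = Suc 0] (mod L)" using cong_solve_coprime_nat[OF cop] by blast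
  have qL: "q ^ L - 1 > 0"
  proof -
    have "q ^ L \<ge> q ^ 1" using q L0 by (intro power_increasing) auto
    then show ?thesis using q by simp
  qed
  obtain z :: 'a where z: "z ^ (q ^ L - 1) = e ^ J" using nth_root_exists[OF qL] by blast
  have z0: "z \<noteq> 0" using z e0 qL by (cases "z = 0") (auto simp: power_0_left)
  have zL: "z ^ (q ^ L) = e ^ J * z"
  proof -
    have "q ^ L = (q ^ L - 1) + 1" using qL by simp
    then have "z ^ (q ^ L) = z ^ (q ^ L - 1) * z" by (metis power_add power_one_right)
    then show ?thesis using z by simp
  qed
  define a where "a w = (u * w) mod L" for w
  have aL: "a w < L" for w using L0 by (simp add: a_def)
  have acong: "[a w * J = w] (mod L)" for w
  proof -
    have "[a w * J = u * w * J] (mod L)" unfolding a_def by (intro cong_mult cong_mod_leftI) auto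
    also have "[u * w * J = w * (J * u)] (mod L)" by (simp add: mult_ac)
    also have "[w * (J * u) = w * Suc 0] (mod L)" by (intro cong_mult u cong_refl)
    finally show ?thesis by simp
  qed
  have dv: "int L dvd (int w - int (a w) * int J)" for w
    using acong[of w] by (metis cong_iff_dvd_diff cong_int_iff cong_sym of_nat_mult)
  define b where "b w = (int w - int (a w) * int J) div int L" for w
  have wb: "int w = int (a w) * int J + int L * b w" for w
    using dv[of w] unfolding b_def by simp
  define H where "H w = z ^ (q ^ a w) * e powi b w" for w
  define A where "A x = H (x div g)" for x
  have H0: "H w \<noteq> 0" for w using z0 e0 by (simp add: H_def)
  have HL: "H (w + L) = e * H w" for w
  proof -
    have a1: "a (w + L) = a w" unfolding a_def by (simp add: distrib_left)
    have "int L * b (w + L) = int L * (b w + 1)"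
      using wb[of "w + L"] wb[of w] a1 by (simp add: algebra_simps)
    then have b1: "b (w + L) = b w + 1" using L0 by simp
    show ?thesis unfolding H_def a1 b1 using e0 by (simp add: power_int_add mult_ac)
  qed
  have HJ: "H (w + J) = H w ^ q" for w
  proof -
    have "a (w + J) = (u * w + u * J) mod L" unfolding a_def by (simp add: distrib_left)
    also have "\<dots> = (a w + (J * u) mod L) mod L" unfolding a_def by (simp add: mod_add_eq mult.commute)
    also have "(J * u) mod L = Suc 0 mod L" using u by (simp add: cong_def)
    also have "(a w + Suc 0 mod L) mod L = (a w + 1) mod L" by (simp add: mod_add_right_eq)
    finally have aJ: "a (w + J) = (a w + 1) mod L" .
    show ?thesis
    proof (cases "a w + 1 < L")
      case True
      then have a1: "a (w + J) = a w + 1" using aJ by simp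
      have "int L * b (w + J) = int L * b w"
        using wb[of "w + J"] wb[of w] a1 by (simp add: algebra_simps) auto
      then have b1: "b (w + J) = b w" using L0 by (metis mult_cancel_left not_gr0 of_nat_eq_0_iff)
      have "z ^ (q ^ (a w + 1)) = (z ^ (q ^ a w)) ^ q" by (simp add: power_mult[symmetric] power_add mult.commute)
      then show ?thesis unfolding H_def a1 b1
        by (simp add: power_mult_distrib powi_frob[OF eq])
    next
      case False
      then have aw: "a w + 1 = L" using aL[of w] by simp
      then have a1: "a (w + J) = 0" using aJ by simp
      have aw': "int L = int (a w) + 1" using aw by simp
      have "int L * b (w + J) = int (w + J)" using wb[of "w + J"] a1 by simp
      also have "\<dots> = int (a w) * int J + int L * b w + int J" using wb[of w] by simp
      also have "\<dots> = (int (a w) + 1) * int J + int L * b w" by (simp add: algebra_simps)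
      also have "\<dots> = int L * (b w + int J)" unfolding aw'[symmetric] by (simp add: algebra_simps)
      finally have "int L * b (w + J) = int L * (b w + int J)" .
      then have b1: "b (w + J) = b w + int J" using L0 by simp
      have "H w ^ q = z ^ (q ^ a w * q) * e powi b w"
        unfolding H_def by (simp add: power_mult_distrib powi_frob[OF eq] power_mult)
      also have "q ^ a w * q = q ^ L" using aw by (metis power_Suc2 Suc_eq_plus1)
      finally have "H w ^ q = e ^ J * z * e powi b w" using zL by simp
      then show ?thesis unfolding H_def a1 b1 using e0 by (simp add: power_int_add mult_ac)
    qed
  qed
  show ?thesis
  proof (intro exI[of _ A] conjI allI)
    fix x
    show "A x \<noteq> 0" using H0 by (simp add: A_def)
    have "(x + t) div g = x div g + L" using g0 tL by simp
    then show "A (x + t) = e * A x" using HL by (simp add: A_def)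
    have "(x + j) div g = x div g + J" using g0 jJ by simp
    then show "A (x + j) = A x ^ q" using HJ by (simp add: A_def)
  qed
qed


lemma prim_inj:
  fixes z :: "'a::field"
  assumes "primitive_root_of_unity m z" "a < m" "b < m" "z ^ a = z ^ b"
  shows "a = b"
proof (rule ccontr)
  have z0: "z \<noteq> 0" using assms(1,2) unfolding primitive_root_of_unity_def
    by (cases "z = 0") (auto simp: power_0_left)
  assume ne: "a \<noteq> b"
  have key: False if ab: "a < b" "b < m" "z ^ a = z ^ b" for a b :: nat
  proof -
    have "z ^ b = z ^ a * z ^ (b - a)" using ab by (metis le_add_diff_inverse less_imp_le power_add)
    then have "z ^ (b - a) = 1" using ab z0 by simp
    then show False using assms(1) ab unfolding primitive_root_of_unity_def by auto
  qed
  from ne have "a < b \<or> b < a" by arith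
  then show False
  proof
    assume "a < b" then show False using key[of a b] assms(3,4) by blast
  next
    assume "b < a" then show False using key[of b a] assms(2,4) by simp
  qed
qed

lemma pow_mod_root:
  fixes z :: "'a::field"
  assumes "z ^ m = 1"
  shows "z ^ a = z ^ (a mod m)"
proof -
  have "z ^ a = z ^ (m * (a div m) + a mod m)" by simp
  also have "\<dots> = (z ^ m) ^ (a div m) * z ^ (a mod m)" by (simp only: power_add power_mult)
  finally have "z ^ a = (z ^ m) ^ (a div m) * z ^ (a mod m)" .
  then show ?thesis using assms by simp
qed

lemma powi_mod_root:
  fixes z :: "'a::field"
  assumes "z ^ m = 1" "m > 0"
  shows "z powi a = z ^ nat (a mod int m)"
proof -
  have z0: "z \<noteq> 0" using assms by (cases "z = 0") (auto simp: power_0_left)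
  have pm: "z powi (int m * (a div int m)) = (z powi int m) powi (a div int m)"
    by (rule power_int_mult)
  have "z powi a = z powi (int m * (a div int m) + a mod int m)" by simp
  also have "\<dots> = z powi (int m * (a div int m)) * z powi (a mod int m)"
    using z0 by (rule power_int_add[OF disjI1])
  also have "\<dots> = z powi (a mod int m)" unfolding pm using assms by simp
  also have "\<dots> = z ^ nat (a mod int m)"
  proof -
    have "a mod int m = int (nat (a mod int m))" using assms(2) by simp
    then show ?thesis by (metis power_int_of_nat)
  qed
  finally show ?thesis .
qed

lemma pow_mat_comm: "B \<in> carrier_mat n n \<Longrightarrow> B ^\<^sub>m j * B = B * B ^\<^sub>m j"
proof (induction j)
  case 0 then show ?case by simp
next
  case (Suc j)
  have "B ^\<^sub>m Suc j * B = (B ^\<^sub>m j * B) * B" by simp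
  also have "\<dots> = (B * B ^\<^sub>m j) * B" using Suc by simp
  also have "\<dots> = B * (B ^\<^sub>m j * B)" by (rule assoc_mult_mat) (use Suc.prems in auto)
  finally show ?case by simp
qed

lemma mult_diag_right:
  fixes Y :: "'a::field mat"
  assumes "Y \<in> carrier_mat t t" "p < t" "i < t"
  shows "(Y * mat t t (\<lambda>(i,j). if i = j then d i else 0)) $$ (p,i) = Y $$ (p,i) * d i"
proof -
  have "(Y * mat t t (\<lambda>(i,j). if i = j then d i else 0)) $$ (p,i) =
     (\<Sum>l\<in>{0..<t}. Y $$ (p,l) * (if l = i then d i else 0))"
    using assms by (auto simp: scalar_prod_def intro!: sum.cong)
  also have "\<dots> = (\<Sum>l\<in>{0..<t}. if l = i then Y $$ (p,i) * d i else 0)"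
    by (intro sum.cong) auto
  also have "\<dots> = Y $$ (p,i) * d i" using assms by simp
  finally show ?thesis .
qed

lemma mult_diag_left:
  fixes Y :: "'a::field mat"
  assumes "Y \<in> carrier_mat t t" "p < t" "i < t"
  shows "(mat t t (\<lambda>(i,j). if i = j then d i else 0) * Y) $$ (p,i) = d p * Y $$ (p,i)"
proof -
  have "(mat t t (\<lambda>(i,j). if i = j then d i else 0) * Y) $$ (p,i) =
     (\<Sum>l\<in>{0..<t}. (if p = l then d p else 0) * Y $$ (l,i))"
    using assms by (auto simp: scalar_prod_def intro!: sum.cong)
  also have "\<dots> = (\<Sum>l\<in>{0..<t}. if l = p then d p * Y $$ (p,i) else 0)"
    by (intro sum.cong) auto
  also have "\<dots> = d p * Y $$ (p,i)" using assms by simp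
  finally show ?thesis .
qed



theorem theorem4p5:
  fixes m n t r q j :: nat and k c :: int
    and \<zeta> \<eta> :: "'s::prime_card mod_ring alg_closure"
  assumes "m \<ge> 1" and "n \<ge> 1"
    and "[k ^ n = 1] (mod int m)"
    and "t = ord m (nat (k mod int m))"
    and "n = r * t"
    and "coprime CARD('s) m"
    and "primitive_root_of_unity m \<zeta>"
    and "\<exists>e\<ge>1. q = CARD('s) ^ e"
    and "[int q = k ^ j] (mod int m)"
    and "\<eta> \<in> finite_subfield q" and "primitive_root_of_unity r \<eta>"
  shows "realizable_over (finite_subfield q) t
           (mat_gen t {rep_a t k \<zeta>, rep_b t (\<eta> powi c)})"
proof -
  have m1: "m \<ge> 1" and n1: "n \<ge> 1" and nrt: "n = r * t" and zprim: "primitive_root_of_unity m \<zeta>"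
    and qj: "[int q = k ^ j] (mod int m)" and etaF: "\<eta> \<in> finite_subfield q"
    and eprim: "primitive_root_of_unity r \<eta>" using assms by auto
  have t0: "t > 0" using n1 nrt by (cases t) auto
  have r0: "r > 0" using n1 nrt by (cases r) auto
  define K where "K = nat (k mod int m)"
  have tK: "t = ord m K" using assms(4) by (simp add: K_def)
  have Kt: "[K ^ t = 1] (mod m)" unfolding tK by (rule conjunct1[OF ord_works])
  have copK: "coprime m K" using t0 tK ord_gt_0_iff by simp
  have intK: "int K = k mod int m" using m1 by (simp add: K_def)
  have kpow: "k ^ i mod int m = int (K ^ i mod m)" for i
  proof -
    have "int (K ^ i mod m) = (k mod int m) ^ i mod int m" by (simp add: of_nat_mod intK[symmetric])
    also have "\<dots> = k ^ i mod int m" by (simp add: power_mod)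
    finally show ?thesis by simp
  qed
  have qK: "[q = K ^ j] (mod m)"
  proof -
    have "int (q mod m) = int (K ^ j mod m)"
      using qj kpow[of j] by (simp add: cong_def of_nat_mod)
    then show ?thesis by (simp add: cong_def)
  qed
  have zm: "\<zeta> ^ m = 1" using zprim by (simp add: primitive_root_of_unity_def)
  define Zf where "Zf x = \<zeta> ^ (K ^ x mod m)" for x
  have ra: "rep_a t k \<zeta> = mat t t (\<lambda>(i,j). if i = j then Zf i else 0)"
  proof (rule eq_matI)
    fix i j assume "i < dim_row (mat t t (\<lambda>(i,j). if i = j then Zf i else 0))"
      "j < dim_col (mat t t (\<lambda>(i,j). if i = j then Zf i else 0))"
    then show "rep_a t k \<zeta> $$ (i,j) = mat t t (\<lambda>(i,j). if i = j then Zf i else 0) $$ (i,j)"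
      using powi_mod_root[OF zm, of "k ^ i"] m1 by (auto simp: rep_a_def Zf_def kpow)
  qed (auto simp: rep_a_def)
  have Zper: "Zf (x + t) = Zf x" for x
  proof -
    have "[K ^ x * K ^ t = K ^ x * 1] (mod m)" by (intro cong_mult cong_refl Kt)
    then show ?thesis by (simp add: Zf_def power_add cong_def)
  qed
  have Zper2: "Zf (y + t * c) = Zf y" for y c
  proof (induction c)
    case (Suc c)
    have "y + t * Suc c = (y + t * c) + t" by simp
    then have "Zf (y + t * Suc c) = Zf (y + t * c)" using Zper[of "y + t * c"] by (simp only:)
    then show ?case using Suc.IH by (simp only:)
  qed simp
  have Zmod: "Zf (x mod t) = Zf x" for x
    using Zper2[of "x mod t" "x div t"] by simp
  have Zq: "Zf x ^ q = Zf (x + j)" for x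
  proof -
    have "Zf x ^ q = \<zeta> ^ ((K ^ x mod m) * q)" by (simp add: Zf_def power_mult)
    also have "\<dots> = \<zeta> ^ (((K ^ x mod m) * q) mod m)" by (rule pow_mod_root[OF zm])
    also have "((K ^ x mod m) * q) mod m = (K ^ x * K ^ j) mod m"
    proof -
      have "[(K ^ x mod m) * q = K ^ x * K ^ j] (mod m)" by (intro cong_mult qK) simp
      then show ?thesis by (simp add: cong_def)
    qed
    finally show ?thesis by (simp add: Zf_def power_add)
  qed
  have Zinj: "inj_on Zf {..<t}"
  proof (rule inj_onI)
    have main: "x = y" if xy: "x \<le> y" "y < t" "Zf x = Zf y" for x y
    proof -
      have "K ^ x mod m = K ^ y mod m"
        by (rule prim_inj[OF zprim]) (use m1 xy in \<open>auto simp: Zf_def\<close>)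
      then have "[K ^ x * 1 = K ^ x * K ^ (y - x)] (mod m)"
        using xy by (simp add: cong_def power_add[symmetric])
      then have "[1 = K ^ (y - x)] (mod m)"
        by (subst (asm) cong_mult_lcancel_nat) (use copK in \<open>auto simp: coprime_commute\<close>)
      then have "[K ^ (y - x) = Suc 0] (mod m)" by (simp add: cong_sym_eq)
      then have "t dvd (y - x)" unfolding tK by (simp add: ord_divides')
      moreover have "y - x < t" using xy by simp
      ultimately have "y - x = 0" by (cases "y - x = 0") (auto dest: dvd_imp_le)
      then show "x = y" using xy by simp
    qed
    fix x y assume "x \<in> {..<t}" "y \<in> {..<t}" "Zf x = Zf y"
    then show "x = y" using main[of x y] main[of y x] by (cases "x \<le> y") auto
  qed
  define e where "e = \<eta> powi c"
  have eta0: "\<eta> \<noteq> 0" using eprim r0 by (cases "\<eta> = 0") (auto simp: primitive_root_of_unity_def power_0_left)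
  have e0: "e \<noteq> 0" using eta0 by (simp add: e_def)
  have etaq: "\<eta> ^ q = \<eta>" using etaF by (simp add: finite_subfield_def)
  have eq: "e ^ q = e" unfolding e_def by (rule powi_frob[OF etaq])
  obtain ee where ee: "ee \<ge> 1" "q = CARD('s) ^ ee" using assms(8) by blast
  have pc: "Factorial_Ring.prime CHAR('s mod_ring alg_closure)" using prime_card by simp
  have hq: "(x + y) ^ q = x ^ q + y ^ q" for x y :: "'s mod_ring alg_closure"
    by (rule freshmans_dream'[OF pc]) (simp add: ee)
  have c2: "CARD('s) \<ge> 2" using prime_card[where 'a='s] prime_ge_2_nat by blast
  have q2: "q \<ge> 2"
  proof -
    have "CARD('s) ^ 1 \<le> CARD('s) ^ ee" using ee c2 by (intro power_increasing) auto
    then show ?thesis using ee c2 by simp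
  qed
  then have q0: "q > 0" by simp
  obtain A :: "nat \<Rightarrow> 's mod_ring alg_closure" where
    A0: "\<And>x. A x \<noteq> 0" and Aper: "\<And>x. A (x + t) = e * A x" and Aq: "\<And>x. A (x + j) = A x ^ q"
    using exA[OF t0 e0 eq q2, of j] by blast
  define Q where "Q = mat t t (\<lambda>(p,i). A i * Zf i ^ p)"
  have Qc: "Q \<in> carrier_mat t t" by (simp add: Q_def)
  have "det Q \<noteq> 0" unfolding Q_def by (rule vandermonde_det[OF Zinj A0])
  from det_non_zero_imp_unit[OF Qc this, of "()"]
  obtain Qi where Qic: "Qi \<in> carrier_mat t t" and QQi: "Q * Qi = 1\<^sub>m t" and QiQ: "Qi * Q = 1\<^sub>m t"
    unfolding Units_def ring_mat_def by auto
  define B where "B = rep_b t e"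
  have Bc: "B \<in> carrier_mat t t" by (simp add: B_def rep_b_carrier)
  define Xm where "Xm = B ^\<^sub>m j"
  have Xc: "Xm \<in> carrier_mat t t" by (simp add: Xm_def Bc)
  have FQ: "frob q Q = Q * Xm"
  proof (rule eq_matI)
    fix p i assume "p < dim_row (Q * Xm)" "i < dim_col (Q * Xm)"
    then have p: "p < t" and i: "i < t" using Qc Xc by auto
    have "(Q * Xm) $$ (p,i) = A (i + j) * Zf (i + j) ^ p"
      unfolding Xm_def B_def
      by (rule RBpow[OF Qc, where G="\<lambda>p x. A x * Zf x ^ p"]) (auto simp: Q_def Aper Zper p i)
    also have "\<dots> = frob q Q $$ (p,i)"
      using p i by (simp add: frob_def Q_def Aq Zq[symmetric] power_mult_distrib power_mult[symmetric] mult.commute)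
    finally show "frob q Q $$ (p,i) = (Q * Xm) $$ (p,i)" by simp
  qed (use Qc Xc in \<open>auto simp: frob_def\<close>)
  have FB: "frob q B = B"
    by (rule eq_matI) (auto simp: frob_def B_def rep_b_def eq q0)
  have XB: "Xm * frob q B = B * Xm" unfolding FB Xm_def by (rule pow_mat_comm[OF Bc])
  define Gid where "Gid p x = (if p = x mod t then e ^ (x div t) else 0)" for p x
  have Xent: "Xm $$ (p,i) = Gid p (i + j)" if "p < t" "i < t" for p i
  proof -
    have "(1\<^sub>m t * Xm) $$ (p,i) = Gid p (i + j)"
      unfolding Xm_def B_def
    proof (rule RBpow[where G=Gid])
      show "Gid p (x + t) = e * Gid p x" for p x using t0 by (simp add: Gid_def)
    qed (use that in \<open>auto simp: Gid_def\<close>)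
    then show ?thesis using Xc by simp
  qed
  have FA: "frob q (rep_a t k \<zeta>) = mat t t (\<lambda>(i,l). if i = l then Zf (i + j) else 0)"
    unfolding ra by (rule eq_matI) (auto simp: frob_def Zq q0)
  have XA: "Xm * frob q (rep_a t k \<zeta>) = rep_a t k \<zeta> * Xm"
  proof (rule eq_matI)
    fix p i assume "p < dim_row (rep_a t k \<zeta> * Xm)" "i < dim_col (rep_a t k \<zeta> * Xm)"
    then have p: "p < t" and i: "i < t" using Xc by (auto simp: rep_a_def)
    have "(Xm * frob q (rep_a t k \<zeta>)) $$ (p,i) = Xm $$ (p,i) * Zf (i + j)"
      unfolding FA using mult_diag_right[OF Xc p i, of "\<lambda>i. Zf (i + j)"] by simp
    also have "\<dots> = Zf p * Xm $$ (p,i)"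
    proof (cases "p = (i + j) mod t")
      case True
      then have "Zf p = Zf (i + j)" using Zmod by simp
      then show ?thesis by simp
    next
      case False
      then show ?thesis using Xent[OF p i] by (simp add: Gid_def)
    qed
    also have "\<dots> = (rep_a t k \<zeta> * Xm) $$ (p,i)"
      unfolding ra using mult_diag_left[OF Xc p i, of Zf] by simp
    finally show "(Xm * frob q (rep_a t k \<zeta>)) $$ (p,i) = (rep_a t k \<zeta> * Xm) $$ (p,i)" .
  qed (use Xc in \<open>auto simp: rep_a_def frob_def\<close>)
  have inv: "M \<in> carrier_mat t t \<and> Xm * frob q M = M * Xm"
    if "M \<in> mat_gen t {rep_a t k \<zeta>, B}" for M
    using that
  proof (induction rule: mat_gen.induct)
    case one
    then show ?case using Xc q0 by (simp add: frob_one)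
  next
    case (gen g)
    then show ?case using XA XB Bc rep_a_carrier by auto
  next
    case (mult g h)
    then have gc: "g \<in> carrier_mat t t" and hc: "h \<in> carrier_mat t t"
      and g: "Xm * frob q g = g * Xm" and h: "Xm * frob q h = h * Xm" by auto
    have fg: "frob q g \<in> carrier_mat t t" and fh: "frob q h \<in> carrier_mat t t"
      using gc hc by (auto simp: frob_def)
    have "Xm * frob q (g * h) = (Xm * frob q g) * frob q h"
      using frob_mult[OF hq q0 gc hc] Xc fg fh by simp
    also have "\<dots> = g * (Xm * frob q h)" using g gc Xc fh by simp
    also have "\<dots> = (g * h) * Xm" using h gc hc Xc by simp
    finally show ?case using gc hc by simp
  qed
  have XQi: "Xm * frob q Qi = Qi"
  proof -
    have fQi: "frob q Qi \<in> carrier_mat t t" using Qic by (simp add: frob_def)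
    have "Xm = Qi * (Q * Xm)" using QiQ Qc Qic Xc by (simp flip: assoc_mult_mat[of Qi t t Q t Xm t])
    also have "\<dots> = Qi * frob q Q" by (simp add: FQ)
    finally have "Xm * frob q Qi = Qi * frob q Q * frob q Qi" by simp
    also have "\<dots> = Qi * frob q (Q * Qi)" using frob_mult[OF hq q0 Qc Qic] Qic Qc fQi
      by (simp add: frob_def)
    also have "\<dots> = Qi" using QQi frob_one[OF q0, of t, where 'a="'s mod_ring alg_closure"] Qic by simp
    finally show ?thesis .
  qed
  show ?thesis
    unfolding realizable_over_def
  proof (rule exI[of _ Qi], rule exI[of _ Q], intro conjI ballI allI impI)
    show "Qi \<in> carrier_mat t t" "Q \<in> carrier_mat t t" "Qi * Q = 1\<^sub>m t" "Q * Qi = 1\<^sub>m t"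
      using Qic Qc QiQ QQi by auto
    fix M i l assume M: "M \<in> mat_gen t {rep_a t k \<zeta>, rep_b t (\<eta> powi c)}" and i: "i < t" and l: "l < t"
    then have Mc: "M \<in> carrier_mat t t" and XM: "Xm * frob q M = M * Xm"
      using inv[of M] by (auto simp: B_def e_def)
    have fM: "frob q M \<in> carrier_mat t t" using Mc by (simp add: frob_def)
    have fQi: "frob q Qi \<in> carrier_mat t t" using Qic by (simp add: frob_def)
    have "frob q (Q * M * Qi) = frob q Q * frob q M * frob q Qi"
      using frob_mult[OF hq q0, of "Q * M" t Qi] frob_mult[OF hq q0 Qc Mc] Qc Mc Qic by simp
    also have "\<dots> = Q * (Xm * frob q M) * frob q Qi" using Qc Xc fM by (simp add: FQ)
    also have "\<dots> = Q * (M * Xm) * frob q Qi" by (simp add: XM)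
    also have "Q * (M * Xm) = Q * M * Xm"
      by (rule assoc_mult_mat[symmetric]) (use Qc Mc Xc in auto)
    also have "Q * M * Xm * frob q Qi = Q * M * (Xm * frob q Qi)"
      by (rule assoc_mult_mat) (use Qc Mc Xc fQi in auto)
    also have "\<dots> = Q * M * Qi" by (simp add: XQi)
    finally have "frob q (Q * M * Qi) = Q * M * Qi" .
    then have "frob q (Q * M * Qi) $$ (i,l) = (Q * M * Qi) $$ (i,l)" by simp
    then show "(Q * M * Qi) $$ (i, l) \<in> finite_subfield q"
      using i l Qc Mc Qic by (simp add: frob_def finite_subfield_def)
  qed
qed

end
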